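(* Let $1\le p\le\infty$ and $1\le q<\infty$. The function $f:[0,1]\to\mathbb{R}$, $f(x)=x$, belongs to $\mathcal{H}_{1,p}$, but not to $\mathcal{H}_{\mathrm{wav},\alpha,p,q}$ for any $\alpha\ge1$. Thus $\mathcal{H}_{1,p}$ is not included in $\mathcal{H}_{\mathrm{wav},\alpha,p,q}$ for any $\alpha\ge1$.
   Context: $\mathcal{H}_{1,p}$ is the space of functions $f:[0,1]\to\mathbb{R}$ of the form $f(x)=c+\int_0^x\tilde f(t)\,dt$ with $c\in\mathbb{R}$ and $\tilde f\in L_p([0,1])$. Haar wavelet space for a fixed integer base $b\ge2$: $\Delta_{-1}=\{0\}$, $\Delta_j=\{0,\dots,b^j-1\}$ ($j\in\mathbb{N}_0$), $\nabla_0=\{0\}$, $\nabla_j=\{0,\dots,b-1\}$ ($j\ge1$); $\psi^0_{0,0}=1_{[0,1)}$ and for $j\ge1$, $i\in\nabla_j$, $k\in\Delta_{j-1}$: $\psi^j_{i,k}(x)=b^{j/2-1}(b\,1_{[b^{-j}(bk+i),b^{-j}(bk+i+1))}(x)-1_{[b^{1-j}k,b^{1-j}(k+1))}(x))$. For $q<\infty$, $\mathcal{H}_{\mathrm{wav},\alpha,p,q}$ is the space of $f\in L_1([0,1])$ with $\sum_{j=0}^\infty b^{q(\alpha-1/p+1/2)j}\big(\sum_{k\in\Delta_{j-1}}\sum_{i\in\nabla_j}|\int_0^1f\psi^j_{i,k}|^p\big)^{q/p}<\infty$ (inner $\ell_p$-sum replaced by a maximum if $p=\infty$). *)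

theory Defs
  imports "HOL-Analysis.Analysis"
begin

definition Lp01 :: "ereal \<Rightarrow> (real \<Rightarrow> real) \<Rightarrow> bool" where
  "Lp01 p g \<longleftrightarrow> set_borel_measurable lebesgue {0..1} g \<and>
     (if p = \<infinity> then (\<exists>C. AE x in lebesgue. x \<in> {0..1} \<longrightarrow> \<bar>g x\<bar> \<le> C)
      else set_integrable lebesgue {0..1} (\<lambda>x. \<bar>g x\<bar> powr real_of_ereal p))"

definition H1p :: "ereal \<Rightarrow> (real \<Rightarrow> real) set" where
  "H1p p = {f. \<exists>c g. Lp01 p g \<and>
     (\<forall>x\<in>{0..1}. f x = c + (LINT t:{0..x}|lebesgue. g t))}"

text \<open>Index sets Delta_j (here indexed by j-1 via Delta_prev j = Delta_{j-1}) and nabla_j.\<close>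
definition Delta_prev :: "nat \<Rightarrow> nat \<Rightarrow> nat set" where
  "Delta_prev b j = (if j = 0 then {0} else {0..<b ^ (j - 1)})"

definition Nabla :: "nat \<Rightarrow> nat \<Rightarrow> nat set" where
  "Nabla b j = (if j = 0 then {0} else {0..<b})"

definition haar :: "nat \<Rightarrow> nat \<Rightarrow> nat \<Rightarrow> nat \<Rightarrow> real \<Rightarrow> real" where
  "haar b j i k x =
    (if j = 0 then indicator {0..<1} x
     else real b powr (real j / 2 - 1) *
       (real b * indicator {real (b * k + i) / real b ^ j ..< real (b * k + i + 1) / real b ^ j} x
        - indicator {real k / real b ^ (j - 1) ..< real (k + 1) / real b ^ (j - 1)} x))"

definition haar_coeff :: "nat \<Rightarrow> (real \<Rightarrow> real) \<Rightarrow> nat \<Rightarrow> nat \<Rightarrow> nat \<Rightarrow> real" where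
  "haar_coeff b f j i k = (LINT x:{0..1}|lebesgue. f x * haar b j i k x)"

definition wav_term :: "nat \<Rightarrow> real \<Rightarrow> ereal \<Rightarrow> real \<Rightarrow> (real \<Rightarrow> real) \<Rightarrow> nat \<Rightarrow> real" where
  "wav_term b \<alpha> p q f j =
    (if p = \<infinity> then
       real b powr (q * (\<alpha> + 1/2) * real j) *
       (Max {\<bar>haar_coeff b f j i k\<bar> | i k. k \<in> Delta_prev b j \<and> i \<in> Nabla b j}) powr q
     else
       real b powr (q * (\<alpha> - 1 / real_of_ereal p + 1/2) * real j) *
       (\<Sum>k\<in>Delta_prev b j. \<Sum>i\<in>Nabla b j. \<bar>haar_coeff b f j i k\<bar> powr real_of_ereal p)
         powr (q / real_of_ereal p))"

text \<open>The Haar wavelet space H_{wav,alpha,p,q} (q finite): a series of nonnegative terms is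
  finite iff it is summable.\<close>
definition Hwav :: "nat \<Rightarrow> real \<Rightarrow> ereal \<Rightarrow> real \<Rightarrow> (real \<Rightarrow> real) set" where
  "Hwav b \<alpha> p q = {f. set_integrable lebesgue {0..1} f \<and> summable (wav_term b \<alpha> p q f)}"

end

theory Submission
  imports Defs
begin

lemma L1:
  fixes a c :: real assumes "0 \<le> a" "a \<le> c" "c \<le> 1"
  shows "((\<lambda>x. x * indicator {a..<c} x) has_integral (c^2 - a^2)/2) {0..1}"
proof -
  have d: "((\<lambda>x. x) has_integral (c^2/2 - a^2/2)) {a..c}"
    apply (rule fundamental_theorem_of_calculus[OF assms(2)])
    apply (auto intro!: derivative_eq_intros simp: has_real_derivative_iff_has_vector_derivative[symmetric])
    done
  have n1: "negligible {x \<in> {a..c} - {a..<c}. x \<noteq> 0}"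
    by (rule negligible_subset[of "{c}"]) auto
  have n2: "negligible {x \<in> {a..<c} - {a..c}. x \<noteq> (0::real)}"
    by (rule negligible_subset[of "{}"]) auto
  have "((\<lambda>x. x) has_integral (c^2 - a^2)/2) {a..<c}"
    using d has_integral_spike_set_eq[OF n1 n2] by (simp add: diff_divide_distrib)
  then have "((\<lambda>x. if x \<in> {a..<c} then x else 0) has_integral (c^2 - a^2)/2) {0..1}"
  proof -
    have "{a..<c} \<subseteq> {0..(1::real)}" using assms by auto
    from has_integral_restrict[OF this, of "\<lambda>x. x"] show ?thesis using \<open>((\<lambda>x. x) has_integral _) {a..<c}\<close> by simp
  qed
  then show ?thesis
    by (rule has_integral_eq[rotated]) (auto simp: indicator_def)
qed

lemma coeff_val:
  fixes b j k :: nat assumes b: "b \<ge> 2" and j: "j \<ge> 1" and k: "k < b ^ (j - 1)"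
  shows "\<bar>haar_coeff b (\<lambda>x. x) j 0 k\<bar> = (real b - 1) / 2 * real b powr (-(3/2) * real j)"
proof -
  define B where "B = real b"
  have B2: "B \<ge> 2" using b by (simp add: B_def)
  define a1 where "a1 = real (b * k) / B ^ j"
  define c1 where "c1 = real (b * k + 1) / B ^ j"
  define a2 where "a2 = real k / B ^ (j - 1)"
  define c2 where "c2 = real (k + 1) / B ^ (j - 1)"
  define m where "m = B powr (real j / 2 - 1)"
  have bj: "B ^ j = B * B ^ (j - 1)" using j by (metis One_nat_def Suc_pred less_eq_Suc_le power_Suc)
  have kk: "real k + 1 \<le> B ^ (j - 1)" using k unfolding B_def
    by (metis Suc_eq_plus1 Suc_leI of_nat_1 of_nat_add of_nat_le_iff of_nat_power)
  have pos: "B ^ (j - 1) > 0" using B2 by simp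
  have h1: "0 \<le> a1" "a1 \<le> c1" "c1 \<le> 1"
  proof -
    have "B * (real k + 1) \<le> B * B ^ (j - 1)" using kk B2 by (intro mult_left_mono) auto
    then show "0 \<le> a1" "a1 \<le> c1" "c1 \<le> 1"
      unfolding a1_def c1_def using pos B2 bj by (auto simp: divide_simps B_def algebra_simps)
  qed
  have h2: "0 \<le> a2" "a2 \<le> c2" "c2 \<le> 1"
    unfolding a2_def c2_def using pos B2 kk
    by (auto simp: divide_simps)
  define V where "V = m * (B * ((c1^2 - a1^2)/2) - (c2^2 - a2^2)/2)"
  have eqf: "\<And>x. x * haar b j 0 k x = m * (B * (x * indicator {a1..<c1} x) - x * indicator {a2..<c2} x)"
    using j unfolding haar_def m_def a1_def c1_def a2_def c2_def B_def
    by (simp add: algebra_simps)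
  have hi: "((\<lambda>x. x * haar b j 0 k x) has_integral V) {0..1}"
    unfolding eqf V_def
    by (intro has_integral_mult_right has_integral_diff L1 h1 h2)
  have bnd: "norm (x * haar b j 0 k x) \<le> m * (B + 1)" if "x \<in> {0..1}" for x
  proof -
    have "\<bar>B * (x * indicator {a1..<c1} x) - x * indicator {a2..<c2} x\<bar> \<le> B + 1"
    proof -
      have "B * x \<le> B" "0 \<le> B * x" using that B2 by (auto simp: mult_left_le)
      then show ?thesis using that B2 unfolding indicator_def
        by (cases "x \<in> {a1..<c1}"; cases "x \<in> {a2..<c2}") (simp_all only: of_bool_eq mult_1_right mult_0_right atLeastAtMost_iff; linarith)+
    qed
    moreover have "m \<ge> 0" unfolding m_def by simp
    ultimately show ?thesis unfolding eqf by (simp add: abs_mult mult_left_mono)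
  qed
  have ai: "(\<lambda>x. x * haar b j 0 k x) absolutely_integrable_on {0..1}"
    apply (rule absolutely_integrable_integrable_bound[where g = "\<lambda>_. m * (B + 1)"])
    using bnd hi by auto
  have "haar_coeff b (\<lambda>x. x) j 0 k = V"
    unfolding haar_coeff_def using set_lebesgue_integral_eq_integral(2)[OF ai] hi
    by (simp add: integral_unique)
  also have "V = - m * (B * (B - 1)) / (2 * B ^ (2 * j))"
    unfolding V_def a1_def c1_def a2_def c2_def using pos B2 bj
    by (simp add: field_simps power2_eq_square power_mult_distrib power_mult B_def)
  finally have "\<bar>haar_coeff b (\<lambda>x. x) j 0 k\<bar> = m * (B * (B - 1)) / (2 * B ^ (2 * j))"
    using B2 by (simp add: m_def)
  also have "\<dots> = (B - 1) / 2 * (m * B / B ^ (2 * j))" by simp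
  also have "m * B / B ^ (2 * j) = B powr (-(3/2) * real j)"
  proof -
    have Bp: "B > 0" using B2 by simp
    have "m * B = B powr (real j / 2 - 1) * B powr 1" unfolding m_def using Bp by simp
    also have "\<dots> = B powr (real j / 2 - 1 + 1)" by (simp only: powr_add)
    also have "\<dots> = B powr (real j / 2)" by simp
    finally have "m * B / B ^ (2 * j) = B powr (real j / 2) / B powr (real (2 * j))"
      using Bp powr_realpow[OF Bp, of "2*j"] by simp
    also have "\<dots> = B powr (real j / 2 - real (2 * j))" by (simp only: powr_diff)
    also have "real j / 2 - real (2 * j) = -(3/2) * real j" by simp
    finally show ?thesis .
  qed
  finally show ?thesis by (simp add: B_def)
qed

lemma term_lb:
  fixes b j :: nat and p :: ereal and q \<alpha> :: real
  assumes b: "b \<ge> 2" and p: "1 \<le> p" and q: "1 \<le> q" and a: "\<alpha> \<ge> 1" and j: "j \<ge> 1"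
  shows "wav_term b \<alpha> p q (\<lambda>x. x) j \<ge> ((real b - 1) / 2) powr q * real b powr (- q)"
proof -
  define B where "B = real b"
  have B2: "B \<ge> 2" using b by (simp add: B_def)
  have Bp: "B > 0" using B2 by simp
  define c where "c = (B - 1) / 2 * B powr (-(3/2) * real j)"
  have cpos: "c > 0" unfolding c_def using B2 by simp
  have cv: "\<And>k. k < b ^ (j - 1) \<Longrightarrow> \<bar>haar_coeff b (\<lambda>x. x) j 0 k\<bar> = c"
    using coeff_val[OF b j] unfolding c_def B_def by simp
  have Dp: "Delta_prev b j = {0..<b ^ (j - 1)}" "Nabla b j = {0..<b}" using j
    by (auto simp: Delta_prev_def Nabla_def)
  have cq: "c powr q = ((B - 1) / 2) powr q * B powr (-(3/2) * real j * q)"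
  proof -
    have "c powr q = ((B - 1) / 2) powr q * (B powr (-(3/2) * real j)) powr q"
      unfolding c_def using B2 by (intro powr_mult; simp)
    also have "(B powr (-(3/2) * real j)) powr q = B powr (-(3/2) * real j * q)" by (simp add: powr_powr)
    finally show ?thesis .
  qed
  have Kpos: "((B - 1) / 2) powr q \<ge> 0" by simp
  show ?thesis
  proof (cases "p = \<infinity>")
    case True
    define M where "M = Max {\<bar>haar_coeff b (\<lambda>x. x) j i k\<bar> | i k. k \<in> Delta_prev b j \<and> i \<in> Nabla b j}"
    have "{\<bar>haar_coeff b (\<lambda>x. x) j i k\<bar> | i k. k \<in> Delta_prev b j \<and> i \<in> Nabla b j}
          = (\<lambda>(i,k). \<bar>haar_coeff b (\<lambda>x. x) j i k\<bar>) ` (Nabla b j \<times> Delta_prev b j)" by auto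
    then have fin: "finite {\<bar>haar_coeff b (\<lambda>x. x) j i k\<bar> | i k. k \<in> Delta_prev b j \<and> i \<in> Nabla b j}"
      using Dp by simp
    have mem: "c \<in> {\<bar>haar_coeff b (\<lambda>x. x) j i k\<bar> | i k. k \<in> Delta_prev b j \<and> i \<in> Nabla b j}"
      using cv[of 0] Dp b by (force)
    have cM: "c \<le> M" unfolding M_def using Max_ge[OF fin mem] .
    have "wav_term b \<alpha> p q (\<lambda>x. x) j = B powr (q * (\<alpha> + 1/2) * real j) * M powr q"
      using True unfolding wav_term_def M_def B_def by simp
    also have "\<dots> \<ge> B powr (q * (\<alpha> + 1/2) * real j) * c powr q"
      using cM cpos q by (intro mult_left_mono powr_mono2) auto
    finally have "wav_term b \<alpha> p q (\<lambda>x. x) j \<ge> ((B - 1) / 2) powr q * (B powr (q * (\<alpha> + 1/2) * real j) * B powr (-(3/2) * real j * q))"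
      unfolding cq by (simp add: algebra_simps)
    also have "B powr (q * (\<alpha> + 1/2) * real j) * B powr (-(3/2) * real j * q) = B powr (q * (\<alpha> - 1) * real j)"
      by (simp add: powr_add[symmetric] algebra_simps)
    finally have W: "wav_term b \<alpha> p q (\<lambda>x. x) j \<ge> ((B - 1) / 2) powr q * B powr (q * (\<alpha> - 1) * real j)" .
    have "B powr (q * (\<alpha> - 1) * real j) \<ge> B powr (- q)"
    proof -
      have "q * (\<alpha> - 1) * real j \<ge> 0" using a q by simp
      then show ?thesis using B2 q by (intro powr_mono) auto
    qed
    then have "((B - 1) / 2) powr q * B powr (q * (\<alpha> - 1) * real j) \<ge> ((B - 1) / 2) powr q * B powr (- q)"
      using Kpos by (rule mult_left_mono)
    then show ?thesis using W unfolding B_def by linarith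
  next
    case False
    define P where "P = real_of_ereal p"
    have P1: "P \<ge> 1" using p False unfolding P_def
      by (cases p) auto
    define S where "S = (\<Sum>k\<in>Delta_prev b j. \<Sum>i\<in>Nabla b j. \<bar>haar_coeff b (\<lambda>x. x) j i k\<bar> powr P)"
    have "S \<ge> (\<Sum>k\<in>Delta_prev b j. c powr P)"
      unfolding S_def
    proof (rule sum_mono)
      fix k assume k: "k \<in> Delta_prev b j"
      have "c powr P = \<bar>haar_coeff b (\<lambda>x. x) j 0 k\<bar> powr P" using cv k Dp by simp
      also have "\<dots> \<le> (\<Sum>i\<in>Nabla b j. \<bar>haar_coeff b (\<lambda>x. x) j i k\<bar> powr P)"
        by (rule member_le_sum) (use Dp b in auto)
      finally show "c powr P \<le> (\<Sum>i\<in>Nabla b j. \<bar>haar_coeff b (\<lambda>x. x) j i k\<bar> powr P)" .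
    qed
    then have S1: "S \<ge> B ^ (j - 1) * c powr P" using Dp by (simp add: B_def)
    have "S powr (q / P) \<ge> (B ^ (j - 1) * c powr P) powr (q / P)"
      using S1 Bp cpos P1 q by (intro powr_mono2) auto
    also have "(B ^ (j - 1) * c powr P) powr (q / P) = B powr ((real j - 1) * q / P) * c powr q"
      using Bp cpos P1 j by (simp add: powr_mult powr_powr powr_realpow[symmetric] of_nat_diff)
    finally have SS: "S powr (q / P) \<ge> B powr ((real j - 1) * q / P) * c powr q" .
    have "wav_term b \<alpha> p q (\<lambda>x. x) j = B powr (q * (\<alpha> - 1 / P + 1/2) * real j) * S powr (q / P)"
      using False unfolding wav_term_def S_def P_def B_def by simp
    also have "\<dots> \<ge> B powr (q * (\<alpha> - 1 / P + 1/2) * real j) * (B powr ((real j - 1) * q / P) * c powr q)"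
      using SS by (intro mult_left_mono) auto
    finally have "wav_term b \<alpha> p q (\<lambda>x. x) j \<ge> ((B - 1) / 2) powr q * (B powr (q * (\<alpha> - 1 / P + 1/2) * real j) * B powr ((real j - 1) * q / P) * B powr (-(3/2) * real j * q))"
      unfolding cq by (simp add: algebra_simps)
    also have "B powr (q * (\<alpha> - 1 / P + 1/2) * real j) * B powr ((real j - 1) * q / P) * B powr (-(3/2) * real j * q)
       = B powr (q * (\<alpha> - 1) * real j - q / P)"
      by (simp add: powr_add[symmetric] algebra_simps diff_divide_distrib add_divide_distrib)
    finally have W: "wav_term b \<alpha> p q (\<lambda>x. x) j \<ge> ((B - 1) / 2) powr q * B powr (q * (\<alpha> - 1) * real j - q / P)" .
    have "B powr (q * (\<alpha> - 1) * real j - q / P) \<ge> B powr (- q)"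
    proof -
      have "q / P \<le> q" using P1 q by (simp add: divide_le_eq)
      moreover have "q * (\<alpha> - 1) * real j \<ge> 0" using a q by simp
      ultimately show ?thesis using B2 by (intro powr_mono) auto
    qed
    then have "((B - 1) / 2) powr q * B powr (q * (\<alpha> - 1) * real j - q / P) \<ge> ((B - 1) / 2) powr q * B powr (- q)"
      using Kpos by (rule mult_left_mono)
    then show ?thesis using W unfolding B_def by linarith
  qed
qed

lemma ai1: "(\<lambda>_. 1::real) absolutely_integrable_on {0..x::real}"
  by (rule absolutely_integrable_on_const) simp

lemma lint1: assumes "0 \<le> x" shows "(LINT t:{0..x}|lebesgue. (1::real)) = x"
  using set_lebesgue_integral_eq_integral(2)[OF ai1[of x]] assms by simp

lemma inH: assumes "1 \<le> p" shows "(\<lambda>x. x) \<in> H1p p"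
proof -
  have m: "set_borel_measurable lebesgue {0..1::real} (\<lambda>_. 1::real)"
    using ai1[of 1] unfolding set_borel_measurable_def set_integrable_def by (rule borel_measurable_integrable)
  have "Lp01 p (\<lambda>_. 1)"
    unfolding Lp01_def using m ai1[of 1] by auto
  then show ?thesis unfolding H1p_def using lint1 by (auto intro!: exI[of _ 0] exI[of _ "\<lambda>_. 1"])
qed

lemma notH: assumes "b \<ge> 2" "1 \<le> p" "1 \<le> q" "\<alpha> \<ge> 1"
  shows "(\<lambda>x. x) \<notin> Hwav b \<alpha> p q"
proof
  assume "(\<lambda>x. x) \<in> Hwav b \<alpha> p q"
  then have s: "summable (wav_term b \<alpha> p q (\<lambda>x. x))" unfolding Hwav_def by auto
  define K where "K = ((real b - 1) / 2) powr q * real b powr (- q)"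
  have Kp: "K > 0" unfolding K_def using assms by simp
  have "wav_term b \<alpha> p q (\<lambda>x. x) \<longlonglongrightarrow> 0" using summable_LIMSEQ_zero[OF s] .
  then have "eventually (\<lambda>j. wav_term b \<alpha> p q (\<lambda>x. x) j < K) sequentially"
    using Kp by (simp add: order_tendsto_iff)
  moreover have "eventually (\<lambda>j. j \<ge> 1) sequentially" by (rule eventually_ge_at_top)
  ultimately obtain j where "wav_term b \<alpha> p q (\<lambda>x. x) j < K" "j \<ge> 1"
    using eventually_sequentially by (metis (mono_tags, lifting) eventually_conj_iff eventually_happens' sequentially_bot)
  with term_lb[OF assms(1-4) \<open>j \<ge> 1\<close>] show False unfolding K_def by simp
qed

theorem proposition1:
  fixes b :: nat and p :: ereal and q :: real
  assumes "b \<ge> 2" and "1 \<le> p" and "1 \<le> q"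
  shows "(\<lambda>x. x) \<in> H1p p \<and> (\<forall>\<alpha>::real. \<alpha> \<ge> 1 \<longrightarrow> (\<lambda>x. x) \<notin> Hwav b \<alpha> p q)
         \<and> (\<forall>\<alpha>::real. \<alpha> \<ge> 1 \<longrightarrow> \<not> H1p p \<subseteq> Hwav b \<alpha> p q)"
  using inH[OF assms(2)] notH[OF assms] by blast

end
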